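(* Let $k \geq 3$ and $n > 3k+1$ be integers such that $n$ is $k$-admissible, let $(V,\mathcal{A})$ be a non-reducible partial $k$-star design of order $n$ with at most $u(n,k)$ stars, and let $L$ be the leftover of $(V,\mathcal{A})$. Then (i) at most one vertex of $L$ has degree at most $k$; (ii) if two adjacent vertices of $L$ have degree less than $2k$, then every other vertex of $L$ has degree at least $2k$.
   Context: A $k$-star is a copy of $K_{1,k}$; its vertex of degree $k$ is the centre and the others are leaves. A partial $k$-star design of order $n$ is a pair $(V,\mathcal{A})$ where $V$ is a set of $n$ vertices and $\mathcal{A}$ is a set of edge-disjoint $k$-stars that are subgraphs of the complete graph $K_V$. The leftover of $(V,\mathcal{A})$ is the graph on $V$ whose edges are the edges of $K_V$ lying in no star of $\mathcal{A}$. A positive integer $n$ is $k$-admissible if $\binom{n}{2}\equiv 0 \pmod{k}$. Here \[u(n,k)= \begin{cases} 2 \lfloor \frac{n-2}{k} \rfloor-1 & \text{if $n \not \equiv 1\pmod{k}$},\\ \frac{2(n-1)}{k} - 2 & \text{if $n \equiv 1\pmod{k}$.} \end{cases} \] A partial $k$-star design $(V,\mathcal{A})$ of order $n$ is reducible if $n \equiv 1 \pmod{k}$, $|\mathcal{A}|=u(n,k)$, and there is a vertex which is the centre of at least one star in $\mathcal{A}$ and is not a leaf of any star in $\mathcal{A}$; otherwise it is non-reducible. *)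

theory Defs
  imports Main
begin

text \<open>Graphs on a vertex set are represented by their edge sets; an edge is a
  2-element set of vertices. A k-star is represented by a pair (centre, set of leaves).\<close>

definition complete_edges :: "'a set \<Rightarrow> 'a set set" where
  "complete_edges V = {{x, y} | x y. x \<in> V \<and> y \<in> V \<and> x \<noteq> y}"

definition star_edges :: "'a \<times> 'a set \<Rightarrow> 'a set set" where
  "star_edges s = {{fst s, y} | y. y \<in> snd s}"

definition is_k_star :: "nat \<Rightarrow> 'a set \<Rightarrow> 'a \<times> 'a set \<Rightarrow> bool" where
  "is_k_star k V s \<longleftrightarrow> fst s \<in> V \<and> snd s \<subseteq> V \<and> fst s \<notin> snd s \<and> finite (snd s) \<and> card (snd s) = k"

definition partial_star_design :: "nat \<Rightarrow> nat \<Rightarrow> 'a set \<Rightarrow> ('a \<times> 'a set) set \<Rightarrow> bool" where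
  "partial_star_design k n V A \<longleftrightarrow>
     finite V \<and> card V = n \<and> (\<forall>s\<in>A. is_k_star k V s) \<and>
     (\<forall>s\<in>A. \<forall>t\<in>A. s \<noteq> t \<longrightarrow> star_edges s \<inter> star_edges t = {})"

definition leftover :: "'a set \<Rightarrow> ('a \<times> 'a set) set \<Rightarrow> 'a set set" where
  "leftover V A = complete_edges V - (\<Union>s\<in>A. star_edges s)"

definition degree :: "'a set \<Rightarrow> 'a set set \<Rightarrow> 'a \<Rightarrow> nat" where
  "degree V E x = card {y \<in> V. y \<noteq> x \<and> {x, y} \<in> E}"

definition admissible :: "nat \<Rightarrow> nat \<Rightarrow> bool" where
  "admissible k n \<longleftrightarrow> (n choose 2) mod k = 0"

definition u_bound :: "nat \<Rightarrow> nat \<Rightarrow> int" where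
  "u_bound n k = (if n mod k \<noteq> 1 mod k then 2 * ((int n - 2) div int k) - 1
                  else 2 * (int n - 1) div int k - 2)"

definition reducible :: "nat \<Rightarrow> nat \<Rightarrow> 'a set \<Rightarrow> ('a \<times> 'a set) set \<Rightarrow> bool" where
  "reducible k n V A \<longleftrightarrow> n mod k = 1 mod k \<and> int (card A) = u_bound n k \<and>
     (\<exists>v\<in>V. (\<exists>S. (v, S) \<in> A) \<and> \<not> (\<exists>s\<in>A. v \<in> snd s))"

end

theory Submission
  imports Defs
begin

lemma csplit:
  fixes c q k :: int assumes "k \<ge> 3" "c \<ge> 0"
  shows "(c \<ge> q+1 \<and> k*c \<ge> k*q + k) \<or> (c = q \<and> k*c = k*q) \<or> (c = q-1 \<and> k*c = k*q - k)
    \<or> (c = q-2 \<and> k*c = k*q - 2*k) \<or> (c \<le> q - 3 \<and> k*c + 3*(q-3-c) \<le> k*q - 3*k)"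
proof -
  consider "c \<ge> q+1" | "c = q" | "c = q-1" | "c = q-2" | "c \<le> q-3" by linarith
  then show ?thesis
  proof cases
    case 1
    then have "k*(q+1) \<le> k*c" using assms by (intro mult_left_mono) auto
    then show ?thesis using 1 by (simp add: algebra_simps)
  next
    case 5
    have "3*(q-3-c) \<le> k*(q-3-c)" using 5 assms by (intro mult_right_mono) auto
    then show ?thesis using 5 by (simp add: algebra_simps)
  qed (auto simp: algebra_simps)
qed

lemma arith_i:
  fixes k q r N a cx cy lx ly dx dy exy eyx :: int
  assumes "k \<ge> 3" "N = k*q + r" "0 \<le> r" "r < k" "r \<noteq> 1" "q \<ge> 3" "r = 0 \<longrightarrow> q \<ge> 4"
   "dx + k*cx + lx = N" "dy + k*cy + ly = N" "0 \<le> dx" "dx \<le> k" "0 \<le> dy" "dy \<le> k"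
   "cx \<ge> 0" "cy \<ge> 0" "lx \<ge> 0" "ly \<ge> 0" "exy \<ge> 0" "eyx \<ge> 0" "exy + eyx \<le> 1"
   "a \<ge> cx + cy + lx - eyx" "a \<ge> cx + cy + ly - exy"
   "a \<le> 2*q - 1" "r = 0 \<Longrightarrow> a \<le> 2*q - 2"
  shows "r = 0 \<and> a = 2*q - 2 \<and> ((lx = 0 \<and> cx \<ge> 1) \<or> (ly = 0 \<and> cy \<ge> 1))"
  using csplit[OF assms(1) assms(14), of q] csplit[OF assms(1) assms(15), of q] assms
  by smt

lemma arith_ii:
  fixes k q r N a cx cy cz lx ly lz dx dy dz ezx exz ezy eyz :: int
  assumes "k \<ge> 3" "N = k*q + r" "0 \<le> r" "r < k" "r \<noteq> 1" "q \<ge> 3" "r = 0 \<longrightarrow> q \<ge> 4"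
   "dx + k*cx + lx = N" "dy + k*cy + ly = N" "dz + k*cz + lz = N"
   "1 \<le> dx" "dx < 2*k" "1 \<le> dy" "dy < 2*k" "0 \<le> dz" "dz < 2*k"
   "cx \<ge> 0" "cy \<ge> 0" "cz \<ge> 0" "lx \<ge> 0" "ly \<ge> 0" "lz \<ge> 0"
   "ezx \<ge> 0" "exz \<ge> 0" "ezx + exz \<le> 1" "ezy \<ge> 0" "eyz \<ge> 0" "ezy + eyz \<le> 1"
   "a \<ge> cx + cy + cz + lx - ezx" "a \<ge> cx + cy + cz + ly - ezy" "a \<ge> cx + cy + cz + lz - exz - eyz"
   "a \<le> 2*q - 1" "r = 0 \<Longrightarrow> a \<le> 2*q - 2"
  shows False
  using csplit[OF assms(1) assms(17), of q] csplit[OF assms(1) assms(18), of q] 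
    csplit[OF assms(1) assms(19), of q] assms
  by smt
definition cen :: "('a \<times> 'a set) set \<Rightarrow> 'a \<Rightarrow> ('a \<times> 'a set) set" where
  "cen A x = {s\<in>A. fst s = x}"
definition lf :: "('a \<times> 'a set) set \<Rightarrow> 'a \<Rightarrow> ('a \<times> 'a set) set" where
  "lf A x = {s\<in>A. x \<in> snd s}"
definition cl :: "('a \<times> 'a set) set \<Rightarrow> 'a \<Rightarrow> 'a \<Rightarrow> ('a \<times> 'a set) set" where
  "cl A v w = {s\<in>A. fst s = v \<and> w \<in> snd s}"

lemma in_star_edges: "y \<in> snd s \<Longrightarrow> {fst s, y} \<in> star_edges s"
  unfolding star_edges_def by auto

lemma star_edges_iff:
  assumes "fst s \<notin> snd s"
  shows "{a, b} \<in> star_edges s \<longleftrightarrow> (a = fst s \<and> b \<in> snd s) \<or> (b = fst s \<and> a \<in> snd s)"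
  using assms unfolding star_edges_def by (auto simp: doubleton_eq_iff)

locale psd =
  fixes k n and V :: "'a set" and A
  assumes psd: "partial_star_design k n V A"
begin

lemma finV: "finite V" and cardV: "card V = n"
  and star: "s \<in> A \<Longrightarrow> is_k_star k V s"
  and disj: "s \<in> A \<Longrightarrow> t \<in> A \<Longrightarrow> s \<noteq> t \<Longrightarrow> star_edges s \<inter> star_edges t = {}"
  using psd unfolding partial_star_design_def by auto

lemma star_props: "s \<in> A \<Longrightarrow> fst s \<in> V \<and> snd s \<subseteq> V \<and> fst s \<notin> snd s \<and> finite (snd s) \<and> card (snd s) = k"
  using star unfolding is_k_star_def by auto

lemma finA: "finite A"
proof -
  have "A \<subseteq> V \<times> Pow V" using star_props by (force simp: mem_Times_iff)
  then show ?thesis using finV by (meson finite_Pow_iff finite_SigmaI finite_subset)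
qed

lemma uniq: "s \<in> A \<Longrightarrow> t \<in> A \<Longrightarrow> e \<in> star_edges s \<Longrightarrow> e \<in> star_edges t \<Longrightarrow> s = t"
  using disj by blast

lemma cl_le1: "card (cl A v w) \<le> 1"
proof -
  have "s = t" if "s \<in> cl A v w" "t \<in> cl A v w" for s t
    using that uniq[of s t "{v,w}"] in_star_edges[of w s] in_star_edges[of w t]
    unfolding cl_def by auto
  then show ?thesis by (simp add: card_le_Suc0_iff_eq finA cl_def)
qed

lemma cl_asym: assumes "cl A v w \<noteq> {}" shows "cl A w v = {}"
proof (rule ccontr)
  assume "cl A w v \<noteq> {}"
  with assms obtain s t where s: "s \<in> A" "fst s = v" "w \<in> snd s" and t: "t \<in> A" "fst t = w" "v \<in> snd t"
    unfolding cl_def by auto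
  have "{v,w} \<in> star_edges s" using in_star_edges[OF s(3)] s by simp
  moreover have "{v,w} \<in> star_edges t" using in_star_edges[OF t(3)] t by (simp add: insert_commute)
  ultimately have "s = t" using uniq s t by blast
  then show False using s t star_props[OF s(1)] by auto
qed

lemma cl_leftover: "cl A v w \<noteq> {} \<Longrightarrow> {v, w} \<notin> leftover V A"
  unfolding cl_def leftover_def using in_star_edges by fastforce

lemma cl_self: "cl A w w = {}"
  unfolding cl_def using star_props by auto

lemma degree_eq:
  assumes x: "x \<in> V"
  shows "degree V (leftover V A) x + k * card (cen A x) + card (lf A x) = n - 1"
proof -
  define D where "D = {y \<in> V. y \<noteq> x \<and> {x, y} \<in> leftover V A}"
  define C1 where "C1 = (\<Union>s\<in>cen A x. snd s)"
  define C2 where "C2 = fst ` lf A x"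
  have fcen: "finite (cen A x)" and flf: "finite (lf A x)" using finA unfolding cen_def lf_def by auto
  have cover: "V - {x} = D \<union> C1 \<union> C2"
  proof
    show "V - {x} \<subseteq> D \<union> C1 \<union> C2"
    proof
      fix y assume y: "y \<in> V - {x}"
      show "y \<in> D \<union> C1 \<union> C2"
      proof (cases "{x,y} \<in> leftover V A")
        case True then show ?thesis using y unfolding D_def by auto
      next
        case False
        have "{x,y} \<in> complete_edges V" using y x unfolding complete_edges_def by auto
        then obtain s where s: "s \<in> A" "{x,y} \<in> star_edges s" using False unfolding leftover_def by auto
        have ns: "fst s \<notin> snd s" using star_props[OF s(1)] by simp
        have "(x = fst s \<and> y \<in> snd s) \<or> (y = fst s \<and> x \<in> snd s)"
          using star_edges_iff[OF ns] s(2) by simp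
        then show ?thesis
        proof
          assume "x = fst s \<and> y \<in> snd s"
          then have "y \<in> C1" unfolding C1_def cen_def using s(1) by (cases s) auto
          then show ?thesis by simp
        next
          assume h: "y = fst s \<and> x \<in> snd s"
          then have "s \<in> lf A x" unfolding lf_def using s(1) by simp
          then have "y \<in> C2" unfolding C2_def using h by auto
          then show ?thesis by simp
        qed
      qed
    qed
  next
    show "D \<union> C1 \<union> C2 \<subseteq> V - {x}"
      unfolding D_def C1_def C2_def cen_def lf_def using star_props by fastforce
  qed
  have d1: "D \<inter> C1 = {}"
  proof (rule ccontr)
    assume "D \<inter> C1 \<noteq> {}"
    then obtain y s where y: "y \<in> D" and s: "s \<in> A" "fst s = x" "y \<in> snd s"
      unfolding C1_def cen_def by auto
    have "{x,y} \<in> star_edges s" using in_star_edges[OF s(3)] s(2) by simp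
    then have "{x,y} \<notin> leftover V A" using s(1) unfolding leftover_def by blast
    with y show False unfolding D_def by simp
  qed
  have d2: "(D \<union> C1) \<inter> C2 = {}"
  proof -
    have "D \<inter> C2 = {}"
    proof (rule ccontr)
      assume "D \<inter> C2 \<noteq> {}"
      then obtain t where y: "fst t \<in> D" and t: "t \<in> A" "x \<in> snd t"
        unfolding C2_def lf_def by auto
      have "{x, fst t} \<in> star_edges t" using in_star_edges[OF t(2)] by (simp add: insert_commute)
      then have "{x, fst t} \<notin> leftover V A" using t(1) unfolding leftover_def by blast
      with y show False unfolding D_def by simp
    qed
    moreover have "C1 \<inter> C2 = {}"
    proof (rule ccontr)
      assume "C1 \<inter> C2 \<noteq> {}"
      then obtain s t where s: "s \<in> A" "fst s = x" "fst t \<in> snd s" and t: "t \<in> A" "x \<in> snd t"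
        unfolding C1_def C2_def cen_def lf_def by auto
      have "{x, fst t} \<in> star_edges s" using in_star_edges[OF s(3)] s by simp
      moreover have "{x, fst t} \<in> star_edges t" using in_star_edges[OF t(2)] by (simp add: insert_commute)
      ultimately have "s = t" using uniq s t by blast
      then show False using s t star_props[OF s(1)] by auto
    qed
    ultimately show ?thesis by blast
  qed
  have fD: "finite D" using finV unfolding D_def by auto
  have fC1: "finite C1" unfolding C1_def using fcen star_props unfolding cen_def by auto
  have fC2: "finite C2" unfolding C2_def using flf by auto
  have cC1: "card C1 = k * card (cen A x)"
  proof -
    have "card C1 = (\<Sum>s\<in>cen A x. card (snd s))"
      unfolding C1_def
    proof (rule card_UN_disjoint[OF fcen])
      show "\<forall>s\<in>cen A x. finite (snd s)" using star_props unfolding cen_def by auto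
      show "\<forall>s\<in>cen A x. \<forall>t\<in>cen A x. s \<noteq> t \<longrightarrow> snd s \<inter> snd t = {}"
      proof (intro ballI impI)
        fix s t assume st: "s \<in> cen A x" "t \<in> cen A x" "s \<noteq> t"
        show "snd s \<inter> snd t = {}"
        proof (rule ccontr)
          assume "snd s \<inter> snd t \<noteq> {}"
          then obtain y where y1: "y \<in> snd s" and y2: "y \<in> snd t" by auto
          have sx: "fst s = x" "fst t = x" "s \<in> A" "t \<in> A" using st unfolding cen_def by auto
          have "{x,y} \<in> star_edges s" using in_star_edges[OF y1] sx by simp
          moreover have "{x,y} \<in> star_edges t" using in_star_edges[OF y2] sx by simp
          ultimately show False using uniq sx st(3) by blast
        qed
      qed
    qed
    also have "\<dots> = (\<Sum>s\<in>cen A x. k)" using star_props unfolding cen_def by auto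
    finally show ?thesis by simp
  qed
  have cC2: "card C2 = card (lf A x)"
    unfolding C2_def
  proof (rule card_image, rule inj_onI)
    fix s t assume st: "s \<in> lf A x" "t \<in> lf A x" "fst s = fst t"
    then have "{fst s, x} \<in> star_edges s" "{fst s, x} \<in> star_edges t"
      using in_star_edges unfolding lf_def by (metis (mono_tags, lifting) mem_Collect_eq)+
    then show "s = t" using uniq st unfolding lf_def by blast
  qed
  have "card (V - {x}) = n - 1" using cardV x finV by simp
  also have "card (V - {x}) = card D + card C1 + card C2"
    using cover d1 d2 fD fC1 fC2 by (simp add: card_Un_disjoint)
  finally show ?thesis using cC1 cC2 unfolding degree_def D_def by simp
qed

lemma count_bound:
  assumes "finite W"
  shows "(\<Sum>v\<in>W. card (cen A v)) + card (lf A w) \<le> card A + (\<Sum>v\<in>W. card (cl A v w))"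
proof -
  define CW where "CW = (\<Union>v\<in>W. cen A v)"
  have fc: "\<And>v. finite (cen A v)" "\<And>v. finite (cl A v w)" "finite (lf A w)"
    using finA unfolding cen_def cl_def lf_def by auto
  have "card CW = (\<Sum>v\<in>W. card (cen A v))"
    unfolding CW_def by (rule card_UN_disjoint) (use assms fc in \<open>auto simp: cen_def\<close>)
  moreover have "card (lf A w) \<le> card (lf A w - CW) + (\<Sum>v\<in>W. card (cl A v w))"
  proof -
    have "lf A w \<subseteq> (lf A w - CW) \<union> (\<Union>v\<in>W. cl A v w)"
      unfolding CW_def cen_def cl_def lf_def by auto
    then have "card (lf A w) \<le> card ((lf A w - CW) \<union> (\<Union>v\<in>W. cl A v w))"
      by (intro card_mono) (use assms fc in auto)
    also have "\<dots> \<le> card (lf A w - CW) + card (\<Union>v\<in>W. cl A v w)" by (rule card_Un_le)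
    also have "card (\<Union>v\<in>W. cl A v w) \<le> (\<Sum>v\<in>W. card (cl A v w))" by (rule card_UN_le[OF assms])
    finally show ?thesis by simp
  qed
  moreover have "card CW + card (lf A w - CW) \<le> card A"
  proof -
    have "CW \<union> (lf A w - CW) \<subseteq> A" unfolding CW_def cen_def lf_def by auto
    then have "card (CW \<union> (lf A w - CW)) \<le> card A" using finA by (rule card_mono[rotated])
    moreover have "card (CW \<union> (lf A w - CW)) = card CW + card (lf A w - CW)"
      by (rule card_Un_disjoint) (use finA fc assms in \<open>auto simp: CW_def\<close>)
    ultimately show ?thesis by simp
  qed
  ultimately show ?thesis by linarith
qed


lemma cl_sum: "card (cl A v w) + card (cl A w v) \<le> 1"
proof (cases "cl A v w = {}")
  case True then show ?thesis using cl_le1[of w v] by simp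
next
  case False then show ?thesis using cl_asym[OF False] cl_le1[of v w] by simp
qed

end

theorem lemma12:
  fixes k n :: nat and V :: "'a set" and A :: "('a \<times> 'a set) set"
  assumes "k \<ge> 3" and "n > 3 * k + 1" and "admissible k n"
    and "partial_star_design k n V A" and "\<not> reducible k n V A"
    and "int (card A) \<le> u_bound n k"
  shows "card {x \<in> V. degree V (leftover V A) x \<le> k} \<le> 1 \<and>
    (\<forall>x\<in>V. \<forall>y\<in>V. {x, y} \<in> leftover V A \<and> degree V (leftover V A) x < 2 * k
           \<and> degree V (leftover V A) y < 2 * k \<longrightarrow>
           (\<forall>z\<in>V. z \<noteq> x \<and> z \<noteq> y \<longrightarrow> degree V (leftover V A) z \<ge> 2 * k))"
proof -
  interpret psd k n V A using assms(4) by unfold_locales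
  define q where "q = (int n - 1) div int k"
  define r where "r = (int n - 1) mod int k"
  have k3: "int k \<ge> 3" using assms(1) by simp
  have Nqr: "int n - 1 = int k * q + r" unfolding q_def r_def by (simp add: mult.commute)
  have r0: "0 \<le> r" "r < int k" using k3 by (simp_all add: r_def)
  have ngt: "int n - 1 > 3 * int k" using assms(2) by simp
  have q3: "q \<ge> 3"
  proof (rule ccontr)
    assume "\<not> q \<ge> 3"
    then have "int k * q \<le> int k * 2" using k3 by (intro mult_left_mono) auto
    then show False using Nqr r0 ngt by linarith
  qed
  have q4: "r = 0 \<longrightarrow> q \<ge> 4"
  proof
    assume "r = 0"
    show "q \<ge> 4"
    proof (rule ccontr)
      assume "\<not> q \<ge> 4"
      then have "int k * q \<le> int k * 3" using k3 by (intro mult_left_mono) auto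
      then show False using Nqr \<open>r = 0\<close> ngt by linarith
    qed
  qed
  have r1: "r \<noteq> 1"
  proof
    assume "r = 1"
    have ev: "even (n * (n - 1))" by (cases n) auto
    have "2 * (n choose 2) = n * (n - 1)" using ev by (simp add: choose_two)
    then have "int (2 * (n choose 2)) = int (n * (n - 1))" by simp
    moreover have "n \<ge> 1" using assms(2) by simp
    ultimately have c1: "2 * int (n choose 2) = int n * (int n - 1)" by (simp add: of_nat_diff)
    have n2: "int n = int k * q + 2" using Nqr \<open>r = 1\<close> by linarith
    have c2: "int n * (int n - 1) = int k * (int k * q * q + 3 * q) + 2"
      using n2 by (simp add: algebra_simps)
    have e: "2 * int (n choose 2) = int k * (int k * q * q + 3 * q) + 2" using c1 c2 by simp
    have "k dvd (n choose 2)" using assms(3) unfolding admissible_def by auto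
    then have "int k dvd 2 * int (n choose 2)" by simp
    then have "int k dvd 2" using e by (metis dvd_add_right_iff dvd_triv_left)
    then have "int k \<le> 2" by (rule zdvd_imp_le) simp
    then show False using k3 by simp
  qed
  have nmod: "(n mod k = 1 mod k) \<longleftrightarrow> r = 0"
  proof -
    have "(n mod k = 1 mod k) \<longleftrightarrow> int n mod int k = 1 mod int k"
      by (metis of_nat_1 of_nat_eq_iff of_nat_mod)
    also have "\<dots> \<longleftrightarrow> int k dvd int n - 1" by (rule mod_eq_dvd_iff)
    also have "\<dots> \<longleftrightarrow> r = 0" unfolding r_def by (simp add: dvd_eq_mod_eq_0)
    finally show ?thesis .
  qed
  have ub: "u_bound n k = (if r = 0 then 2 * q - 2 else 2 * q - 1)"
  proof (cases "r = 0")
    case True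
    have "2 * (int n - 1) = int k * (2 * q) + 0" using Nqr True by simp
    then have "2 * (int n - 1) div int k = 2 * q" by (rule int_div_pos_eq) (use k3 in linarith)+
    then show ?thesis using True nmod unfolding u_bound_def by simp
  next
    case False
    have "int n - 2 = int k * q + (r - 1)" using Nqr by simp
    then have "(int n - 2) div int k = q" by (rule int_div_pos_eq) (use False r0 in linarith)+
    then show ?thesis using False nmod unfolding u_bound_def by simp
  qed
  have cA1: "int (card A) \<le> 2 * q - 1" and cA2: "r = 0 \<Longrightarrow> int (card A) \<le> 2 * q - 2"
    using assms(6) ub by (auto split: if_splits)
  have deq: "int (degree V (leftover V A) x) + int k * int (card (cen A x)) + int (card (lf A x)) = int k * q + r"
    if "x \<in> V" for x
  proof -
    have "int (degree V (leftover V A) x + k * card (cen A x) + card (lf A x)) = int (n - 1)"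
      using degree_eq[OF that] by simp
    then show ?thesis using Nqr assms(2) by simp
  qed
  have cb: "int (\<Sum>v\<in>W. card (cen A v)) + int (card (lf A w)) \<le> int (card A) + int (\<Sum>v\<in>W. card (cl A v w))"
    if "finite W" for W w using count_bound[OF that, of w] by linarith
  have cls: "int (card (cl A v w)) + int (card (cl A w v)) \<le> 1" for v w using cl_sum[of v w] by linarith
  have part1: "card {x \<in> V. degree V (leftover V A) x \<le> k} \<le> 1"
  proof (rule ccontr)
    assume "\<not> ?thesis"
    then obtain x y where x: "x \<in> V" "degree V (leftover V A) x \<le> k" and y: "y \<in> V" "degree V (leftover V A) y \<le> k"
      and xy: "x \<noteq> y"
      using finV by (auto simp: card_le_Suc0_iff_eq)
    have cb1: "int (card (cen A x)) + int (card (cen A y)) + int (card (lf A y)) \<le> int (card A) + int (card (cl A x y))"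
      using cb[of "{x,y}" y] xy cl_self[of y] by simp
    have cb2: "int (card (cen A x)) + int (card (cen A y)) + int (card (lf A x)) \<le> int (card A) + int (card (cl A y x))"
      using cb[of "{x,y}" x] xy cl_self[of x] by simp
    have "r = 0 \<and> int (card A) = 2*q - 2 \<and> ((int (card (lf A x)) = 0 \<and> int (card (cen A x)) \<ge> 1) \<or> (int (card (lf A y)) = 0 \<and> int (card (cen A y)) \<ge> 1))"
      by (rule arith_i[OF k3 refl r0 r1 q3 q4 deq[OF x(1)] deq[OF y(1)]])
        (use x y cls[of x y] cb1 cb2 cA1 cA2 in auto)
    then have r00: "r = 0" and cAe: "int (card A) = u_bound n k"
      and ex: "\<exists>v\<in>V. card (lf A v) = 0 \<and> card (cen A v) \<ge> 1" using ub x y by auto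
    then obtain v where v: "v \<in> V" "card (lf A v) = 0" "card (cen A v) \<ge> 1" by blast
    have "lf A v = {}" using v(2) finA unfolding lf_def by simp
    moreover obtain s where "s \<in> cen A v" using v(3) by (metis card.empty ex_in_conv not_one_le_zero)
    ultimately have "(\<exists>S. (v, S) \<in> A) \<and> \<not> (\<exists>s\<in>A. v \<in> snd s)"
      unfolding lf_def cen_def by (metis (mono_tags, lifting) empty_iff mem_Collect_eq prod.collapse)
    then have "reducible k n V A" unfolding reducible_def using r00 nmod cAe v(1) by auto
    then show False using assms(5) by simp
  qed
  have part2: "degree V (leftover V A) z \<ge> 2 * k"
    if x: "x \<in> V" and y: "y \<in> V" and z: "z \<in> V" and xyL: "{x, y} \<in> leftover V A"
      and dx: "degree V (leftover V A) x < 2 * k" and dy: "degree V (leftover V A) y < 2 * k"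
      and zx: "z \<noteq> x" and zy: "z \<noteq> y" for x y z
  proof (rule ccontr)
    assume "\<not> ?thesis"
    then have dz: "degree V (leftover V A) z < 2 * k" by simp
    have xy: "x \<noteq> y" using xyL unfolding leftover_def complete_edges_def
      by (auto simp: doubleton_eq_iff)
    have dx1: "degree V (leftover V A) x \<ge> 1"
    proof -
      have "y \<in> {w \<in> V. w \<noteq> x \<and> {x, w} \<in> leftover V A}" using y xy xyL by simp
      then show ?thesis unfolding degree_def using finV
        by (metis (no_types, lifting) One_nat_def Suc_leI card_gt_0_iff empty_iff finite_subset mem_Collect_eq subsetI)
    qed
    have dy1: "degree V (leftover V A) y \<ge> 1"
    proof -
      have "x \<in> {w \<in> V. w \<noteq> y \<and> {y, w} \<in> leftover V A}" using x xy xyL by (simp add: insert_commute)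
      then show ?thesis unfolding degree_def using finV
        by (metis (no_types, lifting) One_nat_def Suc_leI card_gt_0_iff empty_iff finite_subset mem_Collect_eq subsetI)
    qed
    have "cl A y x = {}" using cl_leftover[of y x] xyL by (metis insert_commute)
    then have clyx: "card (cl A y x) = 0" by simp
    have "cl A x y = {}" using cl_leftover[of x y] xyL by blast
    then have clxy: "card (cl A x y) = 0" by simp
    have W: "finite {x,y,z}" by simp
    have cbx: "int (card (cen A x)) + int (card (cen A y)) + int (card (cen A z)) + int (card (lf A x)) \<le> int (card A) + int (card (cl A z x))"
      using cb[OF W, of x] xy zx zy cl_self[of x] clyx by (simp add: algebra_simps)
    have cby: "int (card (cen A x)) + int (card (cen A y)) + int (card (cen A z)) + int (card (lf A y)) \<le> int (card A) + int (card (cl A z y))"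
      using cb[OF W, of y] xy zx zy cl_self[of y] clxy by (simp add: algebra_simps)
    have cbz: "int (card (cen A x)) + int (card (cen A y)) + int (card (cen A z)) + int (card (lf A z)) \<le> int (card A) + int (card (cl A x z)) + int (card (cl A y z))"
      using cb[OF W, of z] xy zx zy cl_self[of z] by (simp add: algebra_simps)
    show False
      by (rule arith_ii[where k="int k" and q=q and r=r and N="int k * q + r" and a="int (card A)"
          and cx="int (card (cen A x))" and cy="int (card (cen A y))" and cz="int (card (cen A z))"
          and lx="int (card (lf A x))" and ly="int (card (lf A y))" and lz="int (card (lf A z))"
          and dx="int (degree V (leftover V A) x)" and dy="int (degree V (leftover V A) y)" and dz="int (degree V (leftover V A) z)"
          and ezx="int (card (cl A z x))" and exz="int (card (cl A x z))" and ezy="int (card (cl A z y))" and eyz="int (card (cl A y z))",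
          OF k3 refl r0 r1 q3 q4 deq[OF x] deq[OF y] deq[OF z]])
        (use dx dy dz dx1 dy1 cls[of z x] cls[of z y] cbx cby cbz cA1 cA2 in auto)
  qed
  show ?thesis using part1 part2 by blast
qed

end
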